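(* Let $\Omega$ be a set, and let $G\le\mathrm{Sym}(\Omega)$ be block-faithful and $k$-by-block-transitive on $\Omega$ relative to an equivalence relation $\sim$ that is nontrivial (some class has more than one element), for some $k\ge 2$. Let $N$ be a nontrivial normal subgroup of $G$. Then $G = N G(\omega)$ for every $\omega\in\Omega$. In particular, $N$ is not abelian.
   Context: Blocks are $\sim$-classes; $G(\omega)$ is the stabilizer of $\omega$. $\Omega^{[k]}$ is the set of $k$-tuples no two entries of which lie in the same block. $G$ is $k$-by-block-transitive if $\sim$ is $G$-invariant, there are at least $k$ blocks, and $G$ is transitive on $\Omega^{[k]}$; it is block-faithful if it acts faithfully on the set of blocks. *)

theory Defs
  imports "HOL-Algebra.Algebra"
begin

text \<open>Sym(Omega) is the HOL-Algebra group BijGroup Omega (bijections of Omega,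
  extensional outside Omega). G is a subgroup given as a carrier set.\<close>

definition sep_tuples :: "'a set \<Rightarrow> ('a \<times> 'a) set \<Rightarrow> nat \<Rightarrow> 'a list set" where
  "sep_tuples \<Omega> R k = {xs. length xs = k \<and> set xs \<subseteq> \<Omega> \<and>
      (\<forall>i<k. \<forall>j<k. i \<noteq> j \<longrightarrow> (xs ! i, xs ! j) \<notin> R)}"

definition G_invariant :: "'a set \<Rightarrow> ('a \<times> 'a) set \<Rightarrow> ('a \<Rightarrow> 'a) set \<Rightarrow> bool" where
  "G_invariant \<Omega> R G \<longleftrightarrow>
     (\<forall>g\<in>G. \<forall>x\<in>\<Omega>. \<forall>y\<in>\<Omega>. (x, y) \<in> R \<longleftrightarrow> (g x, g y) \<in> R)"

definition at_least_k_blocks :: "'a set \<Rightarrow> ('a \<times> 'a) set \<Rightarrow> nat \<Rightarrow> bool" where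
  "at_least_k_blocks \<Omega> R k \<longleftrightarrow> (\<exists>B. B \<subseteq> \<Omega> // R \<and> finite B \<and> card B = k)"

definition k_by_block_transitive ::
  "'a set \<Rightarrow> ('a \<times> 'a) set \<Rightarrow> ('a \<Rightarrow> 'a) set \<Rightarrow> nat \<Rightarrow> bool" where
  "k_by_block_transitive \<Omega> R G k \<longleftrightarrow>
     equiv \<Omega> R \<and> G_invariant \<Omega> R G \<and> at_least_k_blocks \<Omega> R k \<and>
     (\<forall>xs\<in>sep_tuples \<Omega> R k. \<forall>ys\<in>sep_tuples \<Omega> R k. \<exists>g\<in>G. map g xs = ys)"

definition block_faithful :: "'a set \<Rightarrow> ('a \<times> 'a) set \<Rightarrow> ('a \<Rightarrow> 'a) set \<Rightarrow> bool" where
  "block_faithful \<Omega> R G \<longleftrightarrow>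
     (\<forall>g\<in>G. (\<forall>B\<in>\<Omega> // R. g ` B = B) \<longrightarrow> g = \<one>\<^bsub>BijGroup \<Omega>\<^esub>)"

definition stabilizer :: "('a \<Rightarrow> 'a) set \<Rightarrow> 'a \<Rightarrow> ('a \<Rightarrow> 'a) set" where
  "stabilizer G \<omega> = {g \<in> G. g \<omega> = \<omega>}"

end

theory Submission
  imports Defs
begin

lemma bij_mult_apply:
  "f \<in> Bij S \<Longrightarrow> g \<in> Bij S \<Longrightarrow> x \<in> S \<Longrightarrow> (f \<otimes>\<^bsub>BijGroup S\<^esub> g) x = f (g x)"
  by (simp add: BijGroup_def compose_def)

lemma bij_inv_apply:
  assumes "f \<in> Bij S" "y \<in> S"
  shows "(inv\<^bsub>BijGroup S\<^esub> f) (f y) = y"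
proof -
  have "f y \<in> S" using assms Bij_imp_funcset by fast
  then show ?thesis using assms
    using bij_betw_inv_into_left[of f S S y] by (simp add: inv_BijGroup Bij_def)
qed

lemma block_image:
  assumes "equiv \<Omega> R" "G_invariant \<Omega> R G" "g \<in> G" "g \<in> Bij \<Omega>" "x \<in> \<Omega>"
  shows "g ` (R``{x}) = R``{g x}"
proof -
  have bij: "bij_betw g \<Omega> \<Omega>" using assms(4) by (simp add: Bij_def)
  have RO: "R \<subseteq> \<Omega> \<times> \<Omega>" using assms(1) by (simp add: equiv_def refl_on_def)
  have inv: "\<And>u v. u \<in> \<Omega> \<Longrightarrow> v \<in> \<Omega> \<Longrightarrow> (u, v) \<in> R \<longleftrightarrow> (g u, g v) \<in> R"
    using assms(2,3) unfolding G_invariant_def by blast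
  show ?thesis
  proof
    show "g ` R `` {x} \<subseteq> R `` {g x}" using inv RO assms(5) by blast
  next
    show "R `` {g x} \<subseteq> g ` R `` {x}"
    proof
      fix y assume y: "y \<in> R `` {g x}"
      then have "y \<in> \<Omega>" using RO by blast
      then obtain y' where y': "y' \<in> \<Omega>" "y = g y'" using bij bij_betw_imp_surj_on by blast
      then have "(x, y') \<in> R" using inv[OF assms(5) y'(1)] y by simp
      then show "y \<in> g ` R `` {x}" using y' by blast
    qed
  qed
qed

lemma sep_from_distinct:
  assumes "equiv \<Omega> R" "set xs \<subseteq> \<Omega>" "length xs = k" "distinct (map (\<lambda>x. R``{x}) xs)"
  shows "xs \<in> sep_tuples \<Omega> R k"
  unfolding sep_tuples_def
proof (intro CollectI conjI allI impI)
  fix i j assume ij: "i < k" "j < k" "i \<noteq> j"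
  show "(xs ! i, xs ! j) \<notin> R"
  proof
    assume "(xs ! i, xs ! j) \<in> R"
    then have "R``{xs ! i} = R``{xs ! j}" using assms(1) equiv_class_eq by metis
    then have "map (\<lambda>x. R``{x}) xs ! i = map (\<lambda>x. R``{x}) xs ! j" using ij assms(3) by simp
    then show False using assms(3,4) ij nth_eq_iff_index_eq by fastforce
  qed
qed (use assms in auto)

lemma extend_tuple:
  assumes eq: "equiv \<Omega> R" and ak: "at_least_k_blocks \<Omega> R k" and k2: "k \<ge> 2"
    and ab: "a \<in> \<Omega>" "b \<in> \<Omega>" "(a, b) \<notin> R"
  shows "\<exists>ys. a # b # ys \<in> sep_tuples \<Omega> R k"
proof -
  obtain B where B: "B \<subseteq> \<Omega> // R" "finite B" "card B = k"
    using ak unfolding at_least_k_blocks_def by blast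
  let ?C = "B - {R``{a}, R``{b}}"
  have "card B - card {R``{a}, R``{b}} \<le> card ?C"
    by (rule diff_card_le_card_Diff) simp
  moreover have "card {R``{a}, R``{b}} \<le> 2" by (simp add: card_insert_le_m1)
  ultimately have "k - 2 \<le> card ?C" using B by linarith
  then obtain C where C: "C \<subseteq> ?C" "card C = k - 2"
    using obtain_subset_with_card_n by metis
  have fC: "finite C" using C(1) B(2) finite_subset by blast
  obtain cs where cs: "set cs = C" "distinct cs" using finite_distinct_list[OF fC] by blast
  have rep: "(SOME y. y \<in> c) \<in> \<Omega> \<and> R``{SOME y. y \<in> c} = c" if "c \<in> C" for c
  proof -
    have "c \<in> \<Omega> // R" using that C(1) B(1) by blast
    then obtain x where x: "x \<in> \<Omega>" "c = R``{x}" by (rule quotientE)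
    then have "x \<in> c" using eq equiv_class_self by fast
    then have s: "(SOME y. y \<in> c) \<in> c" by (rule someI)
    then have "(x, SOME y. y \<in> c) \<in> R" using x by simp
    then show ?thesis using eq x equiv_class_eq[OF eq] eq
      by (metis Image_singleton_iff equiv_class_eq_iff)
  qed
  define ys where "ys = map (\<lambda>c. SOME y. y \<in> c) cs"
  have mys: "map (\<lambda>x. R``{x}) ys = cs"
    unfolding ys_def map_map using rep cs(1) by (intro map_idI) auto
  have setys: "set ys \<subseteq> \<Omega>" unfolding ys_def using rep cs(1) by auto
  have lys: "length ys = k - 2" unfolding ys_def using cs C(2) distinct_card by fastforce
  have neq: "R``{a} \<noteq> R``{b}" using eq ab eq_equiv_class_iff by metis
  show ?thesis
  proof (rule exI, rule sep_from_distinct[OF eq])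
    show "set (a # b # ys) \<subseteq> \<Omega>" using setys ab by auto
    show "length (a # b # ys) = k" using lys k2 by simp
    show "distinct (map (\<lambda>x. R `` {x}) (a # b # ys))"
      using mys cs C(1) neq by auto
  qed
qed

lemma two_trans:
  assumes kbt: "k_by_block_transitive \<Omega> R G k" and k2: "k \<ge> 2"
    and ab: "a \<in> \<Omega>" "b \<in> \<Omega>" "(a, b) \<notin> R"
    and cd: "c \<in> \<Omega>" "d \<in> \<Omega>" "(c, d) \<notin> R"
  shows "\<exists>g\<in>G. g a = c \<and> g b = d"
proof -
  have eq: "equiv \<Omega> R" and ak: "at_least_k_blocks \<Omega> R k"
    and tr: "\<forall>xs\<in>sep_tuples \<Omega> R k. \<forall>ys\<in>sep_tuples \<Omega> R k. \<exists>g\<in>G. map g xs = ys"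
    using kbt unfolding k_by_block_transitive_def by auto
  obtain xs where xs: "a # b # xs \<in> sep_tuples \<Omega> R k" using extend_tuple[OF eq ak k2 ab] by blast
  obtain ys where ys: "c # d # ys \<in> sep_tuples \<Omega> R k" using extend_tuple[OF eq ak k2 cd] by blast
  from tr xs ys obtain g where "g \<in> G" "map g (a # b # xs) = c # d # ys" by blast
  then show ?thesis by auto
qed

theorem corollary2p4:
  fixes \<Omega> :: "'a set" and R :: "('a \<times> 'a) set" and G N :: "('a \<Rightarrow> 'a) set" and k :: nat
  assumes "subgroup G (BijGroup \<Omega>)"
    and "k \<ge> 2"
    and "k_by_block_transitive \<Omega> R G k"
    and "block_faithful \<Omega> R G"
    and "\<exists>x\<in>\<Omega>. \<exists>y\<in>\<Omega>. x \<noteq> y \<and> (x, y) \<in> R"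
    and "N \<lhd> (BijGroup \<Omega>)\<lparr>carrier := G\<rparr>"
    and "N \<noteq> {\<one>\<^bsub>BijGroup \<Omega>\<^esub>}"
  shows "(\<forall>\<omega>\<in>\<Omega>. G = N <#>\<^bsub>BijGroup \<Omega>\<^esub> stabilizer G \<omega>)
     \<and> \<not> (\<forall>a\<in>N. \<forall>b\<in>N. a \<otimes>\<^bsub>BijGroup \<Omega>\<^esub> b = b \<otimes>\<^bsub>BijGroup \<Omega>\<^esub> a)"
proof -
  let ?B = "BijGroup \<Omega>"
  let ?G = "?B\<lparr>carrier := G\<rparr>"
  have grpB: "group ?B" by (rule group_BijGroup)
  interpret B: group ?B by (rule grpB)
  have sG: "subgroup G ?B" by fact
  have eq: "equiv \<Omega> R" and ginv: "G_invariant \<Omega> R G" and ak: "at_least_k_blocks \<Omega> R k"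
    using assms(3) unfolding k_by_block_transitive_def by auto
  have GB: "G \<subseteq> Bij \<Omega>" using subgroup.subset[OF sG] by (simp add: BijGroup_def)
  have nG: "normal N ?G" by fact
  have sN: "subgroup N ?G" using normal_imp_subgroup[OF nG] .
  have NG: "N \<subseteq> G" using subgroup.subset[OF sN] by simp
  have NB: "N \<subseteq> Bij \<Omega>" using NG GB by blast
  have Nmul: "m \<otimes>\<^bsub>?B\<^esub> n \<in> N" if "m \<in> N" "n \<in> N" for m n
    using subgroup.m_closed[OF sN that] by simp
  have conj: "g \<otimes>\<^bsub>?B\<^esub> n \<otimes>\<^bsub>?B\<^esub> inv\<^bsub>?B\<^esub> g \<in> N" if "g \<in> G" "n \<in> N" for g n
    using normal.inv_op_closed2[OF nG, of g n] that group.m_inv_consistent[OF grpB sG that(1)]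
    by simp
  have RO: "R \<subseteq> \<Omega> \<times> \<Omega>" using eq by (simp add: equiv_def refl_on_def)
  have funG: "g x \<in> \<Omega>" if "g \<in> Bij \<Omega>" "x \<in> \<Omega>" for g x
    using Bij_imp_funcset that by fast
  have invB: "inv\<^bsub>?B\<^esub> g \<in> Bij \<Omega>" if "g \<in> Bij \<Omega>" for g
    using restrict_inv_into_Bij[OF that] inv_BijGroup[OF that] by simp
  have multB: "f \<otimes>\<^bsub>?B\<^esub> g \<in> Bij \<Omega>" if "f \<in> Bij \<Omega>" "g \<in> Bij \<Omega>" for f g
    using compose_Bij[OF that] that by (simp add: BijGroup_def)
  have trans: "\<exists>n\<in>N. n x = y" if xy: "x \<in> \<Omega>" "y \<in> \<Omega>" for x y
  proof -
    have oneN: "\<one>\<^bsub>?B\<^esub> \<in> N" using subgroup.one_closed[OF sN] by simp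
    have "\<exists>n\<in>N. n \<noteq> \<one>\<^bsub>?B\<^esub>"
    proof (rule ccontr)
      assume "\<not> ?thesis"
      then have "N = {\<one>\<^bsub>?B\<^esub>}" using oneN by blast
      then show False using assms(7) by simp
    qed
    then obtain n where n: "n \<in> N" "n \<noteq> \<one>\<^bsub>?B\<^esub>" by (elim bexE)
    have nGG: "n \<in> G" using n NG by (rule_tac subsetD)
    have "\<not> (\<forall>B\<in>\<Omega> // R. n ` B = B)"
      using assms(4) nGG n(2) unfolding block_faithful_def by metis
    then obtain Bk where Bk: "Bk \<in> \<Omega> // R" "n ` Bk \<noteq> Bk" by auto
    obtain \<beta> where \<beta>: "\<beta> \<in> \<Omega>" "Bk = R``{\<beta>}" using Bk(1) by (rule quotientE)
    have nb: "n ` Bk = R``{n \<beta>}" using block_image[OF eq ginv _ _ \<beta>(1)] n NG NB \<beta> by blast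
    have nbO: "n \<beta> \<in> \<Omega>" using funG n NB \<beta> by blast
    have nsep: "(\<beta>, n \<beta>) \<notin> R" using Bk nb \<beta> equiv_class_eq[OF eq] by metis
    have diff: "\<exists>m\<in>N. m u = v" if uv: "u \<in> \<Omega>" "v \<in> \<Omega>" "(u, v) \<notin> R" for u v
    proof -
      obtain g where g: "g \<in> G" "g \<beta> = u" "g (n \<beta>) = v"
        using two_trans[OF assms(3,2) \<beta>(1) nbO nsep uv] by blast
      have gB: "g \<in> Bij \<Omega>" using g GB by blast
      have ig: "(inv\<^bsub>?B\<^esub> g) u = \<beta>" using bij_inv_apply[OF gB \<beta>(1)] g by simp
      have "(g \<otimes>\<^bsub>?B\<^esub> n \<otimes>\<^bsub>?B\<^esub> inv\<^bsub>?B\<^esub> g) u = v"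
        using bij_mult_apply[OF multB[OF gB] invB[OF gB] uv(1)] bij_mult_apply[OF gB _ \<beta>(1), of n]
          ig g n NB by auto
      then show ?thesis using conj[OF g(1) n(1)] by blast
    qed
    show ?thesis
    proof (cases "(x, y) \<in> R")
      case False then show ?thesis using diff xy by blast
    next
      case True
      obtain Bs where Bs: "Bs \<subseteq> \<Omega> // R" "finite Bs" "card Bs = k"
        using ak unfolding at_least_k_blocks_def by blast
      have "\<exists>c\<in>Bs. c \<noteq> R``{x}"
      proof (rule ccontr)
        assume "\<not> ?thesis"
        then have "Bs \<subseteq> {R``{x}}" by blast
        then have "card Bs \<le> card {R``{x}}" by (rule card_mono[rotated]) simp
        then have "card Bs \<le> 1" by simp
        then show False using Bs assms(2) by simp
      qed
      then obtain c where c: "c \<in> \<Omega> // R" "c \<noteq> R``{x}" using Bs by blast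
      obtain z where z: "z \<in> \<Omega>" "c = R``{z}" using c(1) by (rule quotientE)
      have xz: "(x, z) \<notin> R"
      proof
        assume "(x, z) \<in> R"
        then have "R``{x} = R``{z}" by (rule equiv_class_eq[OF eq])
        then show False using c z by simp
      qed
      have zy: "(z, y) \<notin> R"
      proof
        assume "(z, y) \<in> R"
        then have "(y, z) \<in> R" using eq by (meson equiv_def symE)
        then have "(x, z) \<in> R" using True eq by (meson equiv_def transE)
        then show False using xz by simp
      qed
      obtain m1 where m1: "m1 \<in> N" "m1 x = z" using diff[OF xy(1) z(1) xz] by blast
      obtain m2 where m2: "m2 \<in> N" "m2 z = y" using diff[OF z(1) xy(2) zy] by blast
      have "(m2 \<otimes>\<^bsub>?B\<^esub> m1) x = y"
        using bij_mult_apply[of m2 \<Omega> m1 x] m1 m2 NB xy by auto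
      then show ?thesis using Nmul[OF m2(1) m1(1)] by blast
    qed
  qed
  have part1: "G = N <#>\<^bsub>?B\<^esub> stabilizer G \<omega>" if \<omega>: "\<omega> \<in> \<Omega>" for \<omega>
  proof
    show "G \<subseteq> N <#>\<^bsub>?B\<^esub> stabilizer G \<omega>"
    proof
      fix g assume g: "g \<in> G"
      then have gB: "g \<in> Bij \<Omega>" using GB by blast
      obtain n where n: "n \<in> N" "n \<omega> = g \<omega>" using trans[OF \<omega> funG[OF gB \<omega>]] by blast
      have nB: "n \<in> Bij \<Omega>" using n NB by blast
      define h where "h = inv\<^bsub>?B\<^esub> n \<otimes>\<^bsub>?B\<^esub> g"
      have hG: "h \<in> G" unfolding h_def
        using subgroup.m_closed[OF sG subgroup.m_inv_closed[OF sG] g] n NG by blast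
      have "h \<omega> = \<omega>" unfolding h_def
        using bij_mult_apply[OF invB[OF nB] gB \<omega>] bij_inv_apply[OF nB \<omega>] n by simp
      then have hs: "h \<in> stabilizer G \<omega>" using hG by (simp add: stabilizer_def)
      have carr: "n \<in> carrier ?B" "g \<in> carrier ?B" using nB gB by (auto simp: BijGroup_def)
      have "n \<otimes>\<^bsub>?B\<^esub> h = g" unfolding h_def
        using carr by (simp add: B.m_assoc[symmetric])
      then show "g \<in> N <#>\<^bsub>?B\<^esub> stabilizer G \<omega>"
        unfolding set_mult_def using n(1) hs by blast
    qed
  next
    show "N <#>\<^bsub>?B\<^esub> stabilizer G \<omega> \<subseteq> G"
      unfolding set_mult_def stabilizer_def
      using subgroup.m_closed[OF sG] NG by blast
  qed
  have part2: "\<not> (\<forall>a\<in>N. \<forall>b\<in>N. a \<otimes>\<^bsub>?B\<^esub> b = b \<otimes>\<^bsub>?B\<^esub> a)"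
  proof
    assume comm: "\<forall>a\<in>N. \<forall>b\<in>N. a \<otimes>\<^bsub>?B\<^esub> b = b \<otimes>\<^bsub>?B\<^esub> a"
    obtain x y where xy: "x \<in> \<Omega>" "y \<in> \<Omega>" "x \<noteq> y" "(x, y) \<in> R" using assms(5) by blast
    obtain m where m: "m \<in> N" "m x = y" using trans[OF xy(1,2)] by blast
    have mB: "m \<in> Bij \<Omega>" using m NB by blast
    have mx: "m ` R``{x} = R``{x}"
      using block_image[OF eq ginv _ mB xy(1)] m NG xy(4) equiv_class_eq[OF eq] by auto
    have "m = \<one>\<^bsub>?B\<^esub>"
      unfolding block_faithful_def
    proof (rule assms(4)[unfolded block_faithful_def, rule_format])
      show "m \<in> G" using m NG by blast
      fix Bk assume "Bk \<in> \<Omega> // R"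
      then obtain w where w: "w \<in> \<Omega>" "Bk = R``{w}" by (rule quotientE)
      obtain n where n: "n \<in> N" "n x = w" using trans[OF xy(1) w(1)] by blast
      have nB: "n \<in> Bij \<Omega>" using n NB by blast
      have Bk: "Bk = n ` R``{x}" using block_image[OF eq ginv _ nB xy(1)] n NG w by auto
      have xO: "R``{x} \<subseteq> \<Omega>" using RO by blast
      have "m ` n ` R``{x} = n ` m ` R``{x}"
      proof -
        have "\<And>z. z \<in> R``{x} \<Longrightarrow> m (n z) = n (m z)"
          using bij_mult_apply[OF mB nB] bij_mult_apply[OF nB mB] comm m n xO by (metis subsetD)
        then show ?thesis unfolding image_image by (rule image_cong[OF refl])
      qed
      then show "m ` Bk = Bk" using Bk mx by simp
    qed
    then have "m x = x" using xy(1) by (simp add: BijGroup_def)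
    then show False using m xy by simp
  qed
  show ?thesis using part1 part2 by blast
qed

end
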